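(* Suppose $A,B,C\subset\mathcal R$ are adjacent zones in that order (i.e. $A$ and $B$ are adjacent, $B$ and $C$ are adjacent, and $B$ lies between $A$ and $C$), and that $A$ and $C$ are closed. Then $A\cup B\cup C$ is closed.
   Context: Let $\mathcal R$ be the set of germs at $0$ of analytic arcs $\{x=\alpha(y),\ y\ge 0\}$ in the closed upper half-plane of $\mathbb R^2$, where $\alpha$ is given by a convergent Puiseux series with positive rational exponents. The order $\mathcal O(\gamma)$ of a Puiseux series is the smallest exponent with nonzero coefficient ($\mathcal O(0)=+\infty$). Write $\alpha<\beta$ if $\alpha(y)<\beta(y)$ for all sufficiently small $y>0$. A subset $A\subset\mathcal R$ is a zone (connected) if $\alpha,\beta\in A$, $\alpha<\gamma<\beta$, $\gamma\in\mathcal R$ imply $\gamma\in A$. Distance $d(\alpha,\beta)=1/\mathcal O(\alpha-\beta)$ (with $1/\infty=0$); width $w(A)=\sup\{d(\alpha,\beta):\alpha,\beta\in A\}$. A zone is closed if there exist $\alpha,\beta\in A$ with $d(\alpha,\beta)=w(A)$, and open otherwise. Two zones $A,B$ are adjacent if $A\cup B$ is connected and $A\cap B=\emptyset$. *)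

theory Defs
  imports "HOL-Analysis.Analysis" "HOL-Library.Extended_Real"
begin

text \<open>Germs at 0 (from the right) of real functions y \<mapsto> x.\<close>

definition germ_eq :: "(real \<Rightarrow> real) \<Rightarrow> (real \<Rightarrow> real) \<Rightarrow> bool" where
  "germ_eq f g \<longleftrightarrow> (\<forall>\<^sub>F y in at_right (0::real). f y = g y)"

lemma germ_eq_equivp: "equivp germ_eq"
  unfolding germ_eq_def
  by (intro equivpI reflpI sympI transpI) (auto elim: eventually_elim2 simp: eq_commute)

quotient_type rgerm = "real \<Rightarrow> real" / germ_eq
  by (rule germ_eq_equivp)

text \<open>N, a represent the convergent Puiseux series sum over k of a k * y^(k/N), with a 0 = 0
  (all exponents positive rationals); f agrees with it for small y > 0.\<close>

definition puiseux_rep :: "nat \<Rightarrow> (nat \<Rightarrow> real) \<Rightarrow> (real \<Rightarrow> real) \<Rightarrow> bool" where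
  "puiseux_rep N a f \<longleftrightarrow> N > 0 \<and> a 0 = 0 \<and>
     (\<exists>r>0. \<forall>t. \<bar>t\<bar> < r \<longrightarrow> summable (\<lambda>k. a k * t ^ k)) \<and>
     (\<forall>\<^sub>F y in at_right (0::real). f y = (\<Sum>k. a k * (y powr (1 / real N)) ^ k))"

lemma puiseux_rep_germ_eq:
  assumes "germ_eq f g" shows "puiseux_rep N a f = puiseux_rep N a g"
proof -
  have "(\<forall>\<^sub>F y in at_right (0::real). f y = (\<Sum>k. a k * (y powr (1 / real N)) ^ k)) =
        (\<forall>\<^sub>F y in at_right (0::real). g y = (\<Sum>k. a k * (y powr (1 / real N)) ^ k))"
    using assms unfolding germ_eq_def by (auto elim: eventually_elim2)
  then show ?thesis unfolding puiseux_rep_def by simp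
qed

definition puiseux_ord_fun :: "(real \<Rightarrow> real) \<Rightarrow> ereal" where
  "puiseux_ord_fun f = (THE q. \<exists>N a. puiseux_rep N a f \<and>
       q = (INF k\<in>{k. a k \<noteq> 0}. ereal (real k / real N)))"

lift_definition is_arc :: "rgerm \<Rightarrow> bool" is "\<lambda>f. \<exists>N a. puiseux_rep N a f"
  using puiseux_rep_germ_eq by blast

lift_definition puiseux_ord :: "rgerm \<Rightarrow> ereal" is puiseux_ord_fun
  unfolding puiseux_ord_fun_def using puiseux_rep_germ_eq by presburger

lift_definition germ_minus :: "rgerm \<Rightarrow> rgerm \<Rightarrow> rgerm" is "\<lambda>f g y. f y - g y"
  unfolding germ_eq_def by (auto elim: eventually_elim2)

lift_definition germ_less :: "rgerm \<Rightarrow> rgerm \<Rightarrow> bool" is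
  "\<lambda>f g. \<forall>\<^sub>F y in at_right (0::real). f y < g y"
proof -
  fix f f' g g' assume "germ_eq f f'" "germ_eq g g'"
  then have "\<forall>\<^sub>F y in at_right (0::real). f y = f' y \<and> g y = g' y"
    unfolding germ_eq_def by (auto intro: eventually_conj)
  then show "(\<forall>\<^sub>F y in at_right (0::real). f y < g y) = (\<forall>\<^sub>F y in at_right (0::real). f' y < g' y)"
    by (auto elim: eventually_elim2)
qed

definition arcs :: "rgerm set" where "arcs = {\<alpha>. is_arc \<alpha>}"

text \<open>d(\<alpha>,\<beta>) = 1 / O(\<alpha> - \<beta>), with 1/\<infinity> = 0 (ereal: inverse \<infinity> = 0).\<close>
definition arc_dist :: "rgerm \<Rightarrow> rgerm \<Rightarrow> ereal" where
  "arc_dist \<alpha> \<beta> = 1 / puiseux_ord (germ_minus \<alpha> \<beta>)"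

definition width :: "rgerm set \<Rightarrow> ereal" where
  "width A = (SUP p\<in>A \<times> A. arc_dist (fst p) (snd p))"

definition zone :: "rgerm set \<Rightarrow> bool" where
  "zone A \<longleftrightarrow> A \<subseteq> arcs \<and>
     (\<forall>\<alpha>\<in>A. \<forall>\<beta>\<in>A. \<forall>\<gamma>\<in>arcs. germ_less \<alpha> \<gamma> \<and> germ_less \<gamma> \<beta> \<longrightarrow> \<gamma> \<in> A)"

definition closed_zone :: "rgerm set \<Rightarrow> bool" where
  "closed_zone A \<longleftrightarrow> (\<exists>\<alpha>\<in>A. \<exists>\<beta>\<in>A. arc_dist \<alpha> \<beta> = width A)"

definition adjacent :: "rgerm set \<Rightarrow> rgerm set \<Rightarrow> bool" where
  "adjacent A B \<longleftrightarrow> zone (A \<union> B) \<and> A \<inter> B = {}"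

definition lies_between :: "rgerm set \<Rightarrow> rgerm set \<Rightarrow> rgerm set \<Rightarrow> bool" where
  "lies_between A B C \<longleftrightarrow> (\<forall>a\<in>A. \<forall>b\<in>B. \<forall>c\<in>C. germ_less a b \<and> germ_less b c)"

end

theory Submission
  imports Defs
begin

lemma lead_lemma:
  assumes rep: "puiseux_rep N a f" and nz: "a k0 \<noteq> 0" and lz: "\<forall>k<k0. a k = 0"
  shows "((\<lambda>y. f y / y powr (real k0 / real N)) \<longlongrightarrow> a k0) (at_right 0)"
proof -
  from rep obtain r where r: "r > 0" and summ: "\<And>t. \<bar>t\<bar> < r \<Longrightarrow> summable (\<lambda>k. a k * t ^ k)"
    and ev: "\<forall>\<^sub>F y in at_right (0::real). f y = (\<Sum>k. a k * (y powr (1 / real N)) ^ k)"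
    and N: "N > 0"
    unfolding puiseux_rep_def by blast
  define h where "h t = (\<Sum>n. a (n + k0) * t ^ n)" for t :: real
  have sh: "summable (\<lambda>n. a (n + k0) * t ^ n)" if "\<bar>t\<bar> < r" "t \<noteq> 0" for t
  proof -
    have "summable (\<lambda>n. a (n + k0) * t ^ (n + k0))"
      using summable_ignore_initial_segment[OF summ[OF that(1)]] by simp
    then have "summable (\<lambda>n. a (n + k0) * t ^ (n + k0) / t ^ k0)" by (rule summable_divide)
    moreover have "a (n + k0) * t ^ (n + k0) / t ^ k0 = a (n + k0) * t ^ n" for n
      using that(2) by (simp add: power_add)
    ultimately show ?thesis by simp
  qed
  have gh: "(\<Sum>k. a k * t ^ k) = t ^ k0 * h t" if "\<bar>t\<bar> < r" "t \<noteq> 0" for t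
  proof -
    have "(\<Sum>k. a k * t ^ k) = (\<Sum>n. a (n + k0) * t ^ (n + k0)) + (\<Sum>i<k0. a i * t ^ i)"
      by (rule suminf_split_initial_segment[OF summ[OF that(1)]])
    also have "(\<Sum>i<k0. a i * t ^ i) = 0" using lz by simp
    also have "(\<Sum>n. a (n + k0) * t ^ (n + k0)) = (\<Sum>n. t ^ k0 * (a (n + k0) * t ^ n))"
      by (simp add: power_add algebra_simps)
    also have "\<dots> = t ^ k0 * h t" unfolding h_def
      by (rule suminf_mult[OF sh[OF that]])
    finally show ?thesis by simp
  qed
  have r2: "\<bar>r/2\<bar> < r" "r/2 \<noteq> 0" using r by auto
  have cont: "isCont h 0" unfolding h_def
    by (rule isCont_powser[OF sh[OF r2]]) (use r in auto)
  have h0: "h 0 = a k0" unfolding h_def using powser_zero[of "\<lambda>n. a (n + k0)"] by simp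
  have p: "((\<lambda>y. y powr (1 / real N)) \<longlongrightarrow> 0) (at_right (0::real))"
    by (rule tendsto_zero_powrI) (use N in \<open>auto intro: tendsto_ident_at eventually_at_right_less[THEN eventually_mono]\<close>)
  have lim: "((\<lambda>y. h (y powr (1 / real N))) \<longlongrightarrow> a k0) (at_right 0)"
    using isCont_tendsto_compose[OF cont p] h0 by simp
  have ev2: "\<forall>\<^sub>F y in at_right (0::real). y powr (1 / real N) < r"
    using order_tendstoD(2)[OF p r] .
  have "\<forall>\<^sub>F y in at_right (0::real). h (y powr (1 / real N)) = f y / y powr (real k0 / real N)"
    using ev ev2 eventually_at_right_less[of "0::real"]
  proof eventually_elim
    case (elim y)
    define t where "t = y powr (1 / real N)"
    have t: "t > 0" "\<bar>t\<bar> < r" using elim unfolding t_def by auto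
    have "t ^ k0 = y powr (real k0 / real N)"
      unfolding t_def using elim by (simp add: powr_realpow[symmetric] powr_powr)
    moreover have "f y = t ^ k0 * h t" using elim gh[OF t(2)] t unfolding t_def by simp
    ultimately show ?case using t elim unfolding t_def by simp
  qed
  then show ?thesis by (rule Lim_transform_eventually[OF lim])
qed


definition lead :: "real \<Rightarrow> real \<Rightarrow> (real \<Rightarrow> real) \<Rightarrow> bool" where
  "lead e c f \<longleftrightarrow> e > 0 \<and> c \<noteq> 0 \<and> ((\<lambda>y. f y / y powr e) \<longlongrightarrow> c) (at_right 0)"

lemma powr_tends0:
  assumes "d > 0" shows "((\<lambda>y. y powr d) \<longlongrightarrow> 0) (at_right (0::real))"
  by (rule tendsto_zero_powrI) (use assms in \<open>auto intro: tendsto_ident_at eventually_at_right_less[THEN eventually_mono]\<close>)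

lemma shift_zero:
  fixes f :: "real \<Rightarrow> real" and e e' c' :: real
  assumes lim: "((\<lambda>y. f y / y powr e') \<longlongrightarrow> c') (at_right 0)" and "e < e'"
  shows "((\<lambda>y. f y / y powr e) \<longlongrightarrow> 0) (at_right 0)"
proof -
  have "((\<lambda>y. y powr (e' - e)) \<longlongrightarrow> 0) (at_right 0)"
    using powr_tends0[of "e' - e"] assms(2) by simp
  from tendsto_mult[OF lim this]
  have "((\<lambda>y. (f y / y powr e') * y powr (e' - e)) \<longlongrightarrow> c' * 0) (at_right 0)" .
  moreover have "\<forall>\<^sub>F y in at_right (0::real). (f y / y powr e') * y powr (e' - e) = f y / y powr e"
    using eventually_at_right_less[of "0::real"]
  proof eventually_elim
    case (elim y)
    have "y powr e' = y powr e * y powr (e' - e)" by (simp add: powr_add[symmetric])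
    then show ?case using elim by (simp add: field_simps)
  qed
  ultimately show ?thesis using Lim_transform_eventually by fastforce
qed

lemma lead_not_zero:
  assumes "lead e c f" shows "\<not> (\<forall>\<^sub>F y in at_right (0::real). f y = 0)"
proof
  assume ev: "\<forall>\<^sub>F y in at_right (0::real). f y = 0"
  have l: "((\<lambda>y. f y / y powr e) \<longlongrightarrow> c) (at_right 0)" and c: "c \<noteq> 0" using assms lead_def by auto
  have "\<forall>\<^sub>F y in at_right (0::real). 0 = f y / y powr e" using ev by eventually_elim simp
  then have "((\<lambda>y. f y / y powr e) \<longlongrightarrow> 0) (at_right 0)"
    by (rule Lim_transform_eventually[OF tendsto_const])
  then show False using tendsto_unique[OF _ l] c by auto
qed

lemma lead_le:
  assumes "lead e c f" "lead e' c' f" shows "e \<le> e'"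
proof (rule ccontr)
  assume "\<not> e \<le> e'"
  then have "((\<lambda>y. f y / y powr e') \<longlongrightarrow> 0) (at_right 0)"
    using shift_zero[of f e c e'] assms unfolding lead_def by auto
  then show False using tendsto_unique[of "at_right (0::real)" "\<lambda>y. f y / y powr e'" 0 c'] assms
    unfolding lead_def by auto
qed

lemma lead_eq: "lead e c f \<Longrightarrow> lead e' c' f \<Longrightarrow> e = e'"
  using lead_le by (metis order.antisym)

lemma rep_cases:
  assumes rep: "puiseux_rep N a f"
  shows "((\<forall>\<^sub>F y in at_right (0::real). f y = 0) \<and> (INF k\<in>{k. a k \<noteq> 0}. ereal (real k / real N)) = \<infinity>)
     \<or> (\<exists>k0. lead (real k0 / real N) (a k0) f \<and> (INF k\<in>{k. a k \<noteq> 0}. ereal (real k / real N)) = ereal (real k0 / real N))"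
proof (cases "\<forall>k. a k = 0")
  case True
  from rep have "\<forall>\<^sub>F y in at_right (0::real). f y = (\<Sum>k. a k * (y powr (1 / real N)) ^ k)"
    unfolding puiseux_rep_def by blast
  then have "\<forall>\<^sub>F y in at_right (0::real). f y = 0" using True by simp
  moreover have "{k. a k \<noteq> 0} = {}" using True by auto
  ultimately show ?thesis by (simp add: top_ereal_def)
next
  case False
  define k0 where "k0 = (LEAST k. a k \<noteq> 0)"
  have nz: "a k0 \<noteq> 0" using False unfolding k0_def by (metis (mono_tags) LeastI)
  have lz: "\<forall>k<k0. a k = 0" unfolding k0_def using not_less_Least by blast
  have N: "N > 0" and a0: "a 0 = 0" using rep unfolding puiseux_rep_def by auto
  have k0: "k0 > 0" using nz a0 by (cases k0) auto
  have "lead (real k0 / real N) (a k0) f"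
    unfolding lead_def using lead_lemma[OF rep nz lz] nz N k0 by auto
  moreover have "(INF k\<in>{k. a k \<noteq> 0}. ereal (real k / real N)) = ereal (real k0 / real N)"
  proof (rule order.antisym)
    show "(INF k\<in>{k. a k \<noteq> 0}. ereal (real k / real N)) \<le> ereal (real k0 / real N)"
      using nz by (intro INF_lower2[of k0]) auto
    show "ereal (real k0 / real N) \<le> (INF k\<in>{k. a k \<noteq> 0}. ereal (real k / real N))"
    proof (rule INF_greatest)
      fix k assume "k \<in> {k. a k \<noteq> 0}"
      then have "k0 \<le> k" unfolding k0_def by (simp add: Least_le)
      then show "ereal (real k0 / real N) \<le> ereal (real k / real N)"
        by (simp add: divide_right_mono)
    qed
  qed
  ultimately show ?thesis by blast
qed

lemma rep_inf_zero:
  assumes "puiseux_rep N a f" "\<forall>\<^sub>F y in at_right (0::real). f y = 0"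
  shows "(INF k\<in>{k. a k \<noteq> 0}. ereal (real k / real N)) = \<infinity>"
  using rep_cases[OF assms(1)] lead_not_zero assms(2) by blast

lemma rep_inf_lead:
  assumes "puiseux_rep N a f" "lead e c f"
  shows "(INF k\<in>{k. a k \<noteq> 0}. ereal (real k / real N)) = ereal e"
  using rep_cases[OF assms(1)] lead_not_zero[OF assms(2)] lead_eq[OF assms(2)] by metis

lemma ord_zero:
  assumes "puiseux_rep N a f" "\<forall>\<^sub>F y in at_right (0::real). f y = 0"
  shows "puiseux_ord_fun f = \<infinity>"
  unfolding puiseux_ord_fun_def
proof (rule the_equality)
  show "\<exists>N a. puiseux_rep N a f \<and> \<infinity> = (INF k\<in>{k. a k \<noteq> 0}. ereal (real k / real N))"
    using assms rep_inf_zero by metis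
  fix q assume "\<exists>N a. puiseux_rep N a f \<and> q = (INF k\<in>{k. a k \<noteq> 0}. ereal (real k / real N))"
  then show "q = \<infinity>" using assms(2) rep_inf_zero by metis
qed

lemma ord_lead:
  assumes "puiseux_rep N a f" "lead e c f"
  shows "puiseux_ord_fun f = ereal e"
  unfolding puiseux_ord_fun_def
proof (rule the_equality)
  show "\<exists>N a. puiseux_rep N a f \<and> ereal e = (INF k\<in>{k. a k \<noteq> 0}. ereal (real k / real N))"
    using assms rep_inf_lead by metis
  fix q assume "\<exists>N a. puiseux_rep N a f \<and> q = (INF k\<in>{k. a k \<noteq> 0}. ereal (real k / real N))"
  then show "q = ereal e" using assms(2) rep_inf_lead by metis
qed

lemma ord_cases:
  assumes "puiseux_rep N a f"
  shows "((\<forall>\<^sub>F y in at_right (0::real). f y = 0) \<and> puiseux_ord_fun f = \<infinity>) \<or>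
         (\<exists>e c. lead e c f \<and> puiseux_ord_fun f = ereal e)"
  using rep_cases[OF assms] ord_zero[OF assms] ord_lead[OF assms] by blast


lemma powr_pow_aux:
  assumes "(y::real) > 0" "N > 0" "M > 0"
  shows "(y powr (1 / real (N * M))) ^ M = y powr (1 / real N)"
proof -
  have "(y powr (1 / real (N * M))) ^ M = (y powr (1 / real (N * M))) powr real M"
    using assms by (simp add: powr_realpow)
  also have "\<dots> = y powr (1 / real (N * M) * real M)" by (simp add: powr_powr)
  also have "1 / real (N * M) * real M = 1 / real N" using assms by (simp add: field_simps)
  finally show ?thesis .
qed

lemma rep_spread:
  assumes rep: "puiseux_rep N a f" and M: "M > 0"
  shows "puiseux_rep (N * M) (\<lambda>k. if M dvd k then a (k div M) else 0) f"
proof -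
  define a' where "a' = (\<lambda>k. if M dvd k then a (k div M) else 0)"
  from rep obtain r where r: "r > 0" and summ: "\<And>t. \<bar>t\<bar> < r \<Longrightarrow> summable (\<lambda>k. a k * t ^ k)"
    and ev: "\<forall>\<^sub>F y in at_right (0::real). f y = (\<Sum>k. a k * (y powr (1 / real N)) ^ k)"
    and N: "N > 0" and a0: "a 0 = 0"
    unfolding puiseux_rep_def by blast
  have sm: "strict_mono (\<lambda>j::nat. M * j)" using M by (simp add: strict_mono_def)
  have rng: "a' n * t ^ n = 0" if "n \<notin> range (\<lambda>j. M * j)" for n and t :: real
  proof -
    have "\<not> M dvd n" using that by (auto elim: dvdE)
    then show ?thesis unfolding a'_def by simp
  qed
  have re: "(\<lambda>j. a' (M * j) * t ^ (M * j)) = (\<lambda>j. a j * (t ^ M) ^ j)" for t :: real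
    using M unfolding a'_def by (simp add: power_mult)
  have seq: "(\<Sum>k. a' k * t ^ k) = (\<Sum>j. a j * (t ^ M) ^ j)" for t :: real
    using suminf_mono_reindex[OF sm, of "\<lambda>k. a' k * t ^ k"] rng re by simp
  have summ': "summable (\<lambda>k. a' k * t ^ k)" if "\<bar>t\<bar> < min 1 r" for t :: real
  proof -
    have "\<bar>t\<bar> ^ M \<le> \<bar>t\<bar> ^ 1" using that M by (intro power_decreasing) auto
    then have "\<bar>t ^ M\<bar> < r" using that by (simp add: power_abs)
    then obtain s where "(\<lambda>j. a j * (t ^ M) ^ j) sums s" using summ by (auto simp: summable_def)
    then have "(\<lambda>j. a' (M * j) * t ^ (M * j)) sums s" using re by simp
    then have "(\<lambda>k. a' k * t ^ k) sums s" using sums_mono_reindex[OF sm, of "\<lambda>k. a' k * t ^ k"] rng by blast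
    then show ?thesis by (auto simp: summable_def)
  qed
  have ev': "\<forall>\<^sub>F y in at_right (0::real). f y = (\<Sum>k. a' k * (y powr (1 / real (N * M))) ^ k)"
    using ev eventually_at_right_less[of "0::real"]
  proof eventually_elim
    case (elim y)
    then show ?case unfolding seq using powr_pow_aux[of y N M] N M by simp
  qed
  have "a' 0 = 0" using a0 unfolding a'_def by simp
  then show ?thesis unfolding puiseux_rep_def a'_def[symmetric]
    using N M summ' ev' r by (intro conjI exI[of _ "min 1 r"]) auto
qed

lemma rep_diff:
  assumes f: "puiseux_rep N a f" and g: "puiseux_rep N b g"
  shows "puiseux_rep N (\<lambda>k. a k - b k) (\<lambda>y. f y - g y)"
proof -
  from f obtain r1 where r1: "r1 > 0" and s1: "\<And>t. \<bar>t\<bar> < r1 \<Longrightarrow> summable (\<lambda>k. a k * t ^ k)"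
    and ev1: "\<forall>\<^sub>F y in at_right (0::real). f y = (\<Sum>k. a k * (y powr (1 / real N)) ^ k)"
    and N: "N > 0" and a0: "a 0 = 0"
    unfolding puiseux_rep_def by blast
  from g obtain r2 where r2: "r2 > 0" and s2: "\<And>t. \<bar>t\<bar> < r2 \<Longrightarrow> summable (\<lambda>k. b k * t ^ k)"
    and ev2: "\<forall>\<^sub>F y in at_right (0::real). g y = (\<Sum>k. b k * (y powr (1 / real N)) ^ k)"
    and b0: "b 0 = 0"
    unfolding puiseux_rep_def by blast
  define r where "r = min r1 r2"
  have r: "r > 0" using r1 r2 r_def by auto
  have s: "summable (\<lambda>k. (a k - b k) * t ^ k)" if "\<bar>t\<bar> < r" for t
    using summable_diff[OF s1 s2, of t t] that r_def by (simp add: algebra_simps)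
  have p: "((\<lambda>y. y powr (1 / real N)) \<longlongrightarrow> 0) (at_right (0::real))"
    using powr_tends0[of "1 / real N"] N by simp
  have ev3: "\<forall>\<^sub>F y in at_right (0::real). y powr (1 / real N) < r"
    using order_tendstoD(2)[OF p r] .
  have "\<forall>\<^sub>F y in at_right (0::real). f y - g y = (\<Sum>k. (a k - b k) * (y powr (1 / real N)) ^ k)"
    using ev1 ev2 ev3 eventually_at_right_less[of "0::real"]
  proof eventually_elim
    case (elim y)
    define t where "t = y powr (1 / real N)"
    have t: "\<bar>t\<bar> < r1" "\<bar>t\<bar> < r2" using elim unfolding t_def r_def by auto
    have "(\<Sum>k. (a k - b k) * t ^ k) = (\<Sum>k. a k * t ^ k) - (\<Sum>k. b k * t ^ k)"
      using suminf_diff[OF s1[OF t(1)] s2[OF t(2)]] by (simp add: algebra_simps)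
    then show ?case using elim unfolding t_def by simp
  qed
  then show ?thesis unfolding puiseux_rep_def using N a0 b0 s r by auto
qed

lemma arc_diff:
  assumes "\<exists>N a. puiseux_rep N a f" "\<exists>N a. puiseux_rep N a g"
  shows "\<exists>N a. puiseux_rep N a (\<lambda>y. f y - g y)"
proof -
  obtain N a M b where f: "puiseux_rep N a f" and g: "puiseux_rep M b g" using assms by blast
  have N: "N > 0" and M: "M > 0" using f g unfolding puiseux_rep_def by auto
  have f': "puiseux_rep (N * M) (\<lambda>k. if M dvd k then a (k div M) else 0) f" by (rule rep_spread[OF f M])
  have g': "puiseux_rep (N * M) (\<lambda>k. if N dvd k then b (k div N) else 0) g"
    using rep_spread[OF g N] by (simp add: mult.commute)
  show ?thesis using rep_diff[OF f' g'] by blast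
qed


abbreviation pa :: "(real \<Rightarrow> real) \<Rightarrow> bool" where
  "pa f \<equiv> \<exists>N a. puiseux_rep N a f"

lemma ord_cases':
  assumes "pa f"
  shows "((\<forall>\<^sub>F y in at_right (0::real). f y = 0) \<and> puiseux_ord_fun f = \<infinity>) \<or>
         (\<exists>e c. lead e c f \<and> puiseux_ord_fun f = ereal e)"
  using assms ord_cases by blast

lemma ord_nonneg: "pa f \<Longrightarrow> puiseux_ord_fun f \<ge> 0"
  using ord_cases' unfolding lead_def by fastforce

lemma lead_cong:
  assumes "lead e c u" "\<forall>\<^sub>F y in at_right (0::real). u y = w y"
  shows "lead e c w"
proof -
  have "\<forall>\<^sub>F y in at_right (0::real). u y / y powr e = w y / y powr e"
    using assms(2) by eventually_elim simp
  moreover have "((\<lambda>y. u y / y powr e) \<longlongrightarrow> c) (at_right 0)" using assms(1) unfolding lead_def by blast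
  ultimately have "((\<lambda>y. w y / y powr e) \<longlongrightarrow> c) (at_right 0)"
    using Lim_transform_eventually by fastforce
  then show ?thesis using assms(1) unfolding lead_def by blast
qed

lemma ord_sym:
  assumes "pa f" "pa g"
  shows "puiseux_ord_fun (\<lambda>y. f y - g y) = puiseux_ord_fun (\<lambda>y. g y - f y)"
proof -
  have p1: "pa (\<lambda>y. f y - g y)" and p2: "pa (\<lambda>y. g y - f y)" using arc_diff assms by blast+
  from ord_cases'[OF p1] show ?thesis
  proof
    assume a: "(\<forall>\<^sub>F y in at_right (0::real). f y - g y = 0) \<and> puiseux_ord_fun (\<lambda>y. f y - g y) = \<infinity>"
    then have "\<forall>\<^sub>F y in at_right (0::real). g y - f y = 0" by (auto elim: eventually_mono)
    then show ?thesis using a p2 ord_zero by metis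
  next
    assume "\<exists>e c. lead e c (\<lambda>y. f y - g y) \<and> puiseux_ord_fun (\<lambda>y. f y - g y) = ereal e"
    then obtain e c where l: "lead e c (\<lambda>y. f y - g y)" and o: "puiseux_ord_fun (\<lambda>y. f y - g y) = ereal e" by blast
    have "((\<lambda>y. - ((f y - g y) / y powr e)) \<longlongrightarrow> - c) (at_right 0)"
      using l unfolding lead_def by (intro tendsto_minus) auto
    then have "lead e (-c) (\<lambda>y. g y - f y)" using l unfolding lead_def by (simp add: minus_divide_left)
    then show ?thesis using o p2 ord_lead by metis
  qed
qed

lemma ord_ultra:
  assumes "pa f" "pa g" "pa h"
  shows "min (puiseux_ord_fun (\<lambda>y. f y - g y)) (puiseux_ord_fun (\<lambda>y. g y - h y))
           \<le> puiseux_ord_fun (\<lambda>y. f y - h y)"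
proof -
  define u where "u = (\<lambda>y. f y - g y)"
  define v where "v = (\<lambda>y. g y - h y)"
  define w where "w = (\<lambda>y. f y - h y)"
  have pu: "pa u" and pv: "pa v" and pw: "pa w" unfolding u_def v_def w_def using arc_diff assms by blast+
  have wuv: "w y = u y + v y" for y unfolding u_def v_def w_def by simp
  have "min (puiseux_ord_fun u) (puiseux_ord_fun v) \<le> puiseux_ord_fun w"
  proof (cases "\<forall>\<^sub>F y in at_right (0::real). w y = 0")
    case True then show ?thesis using ord_zero pw by (metis top_ereal_def top_greatest)
  next
    case wnz: False
    then obtain e3 c3 where l3: "lead e3 c3 w" and o3: "puiseux_ord_fun w = ereal e3"
      using ord_cases'[OF pw] by blast
    show ?thesis
    proof (cases "\<forall>\<^sub>F y in at_right (0::real). u y = 0")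
      case True
      then have "\<forall>\<^sub>F y in at_right (0::real). w y = v y" by eventually_elim (simp add: wuv)
      then have "lead e3 c3 v" using lead_cong l3 by blast
      then have "puiseux_ord_fun v = ereal e3" using ord_lead pv by blast
      then show ?thesis using o3 by simp
    next
      case unz: False
      then obtain e1 c1 where l1: "lead e1 c1 u" and o1: "puiseux_ord_fun u = ereal e1"
        using ord_cases'[OF pu] by blast
      show ?thesis
      proof (cases "\<forall>\<^sub>F y in at_right (0::real). v y = 0")
        case True
        then have "\<forall>\<^sub>F y in at_right (0::real). w y = u y" by eventually_elim (simp add: wuv)
        then have "lead e3 c3 u" using lead_cong l3 by blast
        then have "puiseux_ord_fun u = ereal e3" using ord_lead pu by blast
        then show ?thesis using o3 by simp
      next
        case False
        then obtain e2 c2 where l2: "lead e2 c2 v" and o2: "puiseux_ord_fun v = ereal e2"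
          using ord_cases'[OF pv] by blast
        have "min e1 e2 \<le> e3"
        proof (rule ccontr)
          assume "\<not> min e1 e2 \<le> e3"
          then have lt: "e3 < e1" "e3 < e2" by auto
          have t1: "((\<lambda>y. u y / y powr e3) \<longlongrightarrow> 0) (at_right 0)"
            using shift_zero[OF _ lt(1)] l1 unfolding lead_def by blast
          have t2: "((\<lambda>y. v y / y powr e3) \<longlongrightarrow> 0) (at_right 0)"
            using shift_zero[OF _ lt(2)] l2 unfolding lead_def by blast
          have "((\<lambda>y. u y / y powr e3 + v y / y powr e3) \<longlongrightarrow> 0 + 0) (at_right 0)"
            by (rule tendsto_add[OF t1 t2])
          then have "((\<lambda>y. w y / y powr e3) \<longlongrightarrow> 0) (at_right 0)"
            by (simp add: wuv add_divide_distrib)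
          then show False using l3 tendsto_unique[of "at_right (0::real)" "\<lambda>y. w y / y powr e3" 0 c3]
            unfolding lead_def by auto
        qed
        then show ?thesis using o1 o2 o3 by (simp add: min_def split: if_splits)
      qed
    qed
  qed
  then show ?thesis unfolding u_def v_def w_def .
qed

lemma ord_mono:
  assumes "pa f" "pa g" "pa h"
    and fg: "\<forall>\<^sub>F y in at_right (0::real). f y < g y" and gh: "\<forall>\<^sub>F y in at_right (0::real). g y < h y"
  shows "puiseux_ord_fun (\<lambda>y. h y - f y) \<le> puiseux_ord_fun (\<lambda>y. g y - f y)"
proof -
  define u where "u = (\<lambda>y. g y - f y)"
  define w where "w = (\<lambda>y. h y - f y)"
  have pu: "pa u" and pw: "pa w" unfolding u_def w_def using arc_diff assms by blast+
  have nz: "\<not> (\<forall>\<^sub>F y in at_right (0::real). q y = 0)"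
    if "\<forall>\<^sub>F y in at_right (0::real). 0 < q y" for q :: "real \<Rightarrow> real"
  proof
    assume "\<forall>\<^sub>F y in at_right (0::real). q y = 0"
    with that have "\<forall>\<^sub>F y in at_right (0::real). False" by eventually_elim simp
    then show False by simp
  qed
  have upos: "\<forall>\<^sub>F y in at_right (0::real). 0 < u y" using fg unfolding u_def by eventually_elim simp
  have uw: "\<forall>\<^sub>F y in at_right (0::real). u y < w y" using gh unfolding u_def w_def by eventually_elim simp
  have wpos: "\<forall>\<^sub>F y in at_right (0::real). 0 < w y" using upos uw by eventually_elim simp
  obtain e1 c1 where l1: "lead e1 c1 u" and o1: "puiseux_ord_fun u = ereal e1"
    using ord_cases'[OF pu] nz[OF upos] by blast
  obtain e2 c2 where l2: "lead e2 c2 w" and o2: "puiseux_ord_fun w = ereal e2"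
    using ord_cases'[OF pw] nz[OF wpos] by blast
  have "e2 \<le> e1"
  proof (rule ccontr)
    assume "\<not> e2 \<le> e1"
    then have lt: "e1 < e2" by simp
    have tw: "((\<lambda>y. w y / y powr e1) \<longlongrightarrow> 0) (at_right 0)"
      using shift_zero[OF _ lt] l2 unfolding lead_def by blast
    have tu: "((\<lambda>y. u y / y powr e1) \<longlongrightarrow> c1) (at_right 0)" using l1 unfolding lead_def by blast
    have "\<forall>\<^sub>F y in at_right (0::real). 0 \<le> u y / y powr e1"
      using upos eventually_at_right_less[of "0::real"] by eventually_elim simp
    then have "0 \<le> c1" using tendsto_le[OF _ tu tendsto_const] by simp
    moreover have "\<forall>\<^sub>F y in at_right (0::real). u y / y powr e1 \<le> w y / y powr e1"
      using uw eventually_at_right_less[of "0::real"] by eventually_elim (simp add: divide_right_mono)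
    then have "c1 \<le> 0" using tendsto_le[OF _ tw tu] by simp
    ultimately show False using l1 unfolding lead_def by simp
  qed
  then show ?thesis using o1 o2 unfolding u_def w_def by simp
qed


lemma dist_fun: "arc_dist \<alpha> \<beta> = inverse (puiseux_ord_fun (\<lambda>y. rep_rgerm \<alpha> y - rep_rgerm \<beta> y))"
proof -
  have "germ_minus \<alpha> \<beta> = abs_rgerm (\<lambda>y. rep_rgerm \<alpha> y - rep_rgerm \<beta> y)"
    by (metis germ_minus.abs_eq Quotient_abs_rep[OF Quotient_rgerm])
  then show ?thesis unfolding arc_dist_def by (simp add: puiseux_ord.abs_eq divide_ereal_def)
qed

lemma less_fun: "germ_less \<alpha> \<beta> = (\<forall>\<^sub>F y in at_right (0::real). rep_rgerm \<alpha> y < rep_rgerm \<beta> y)"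
  by (metis germ_less.abs_eq Quotient_abs_rep[OF Quotient_rgerm])

lemma arc_fun: "\<alpha> \<in> arcs \<Longrightarrow> pa (rep_rgerm \<alpha>)"
  unfolding arcs_def by (simp add: is_arc.rep_eq)

lemma G_sym: "\<alpha> \<in> arcs \<Longrightarrow> \<beta> \<in> arcs \<Longrightarrow> arc_dist \<alpha> \<beta> = arc_dist \<beta> \<alpha>"
  unfolding dist_fun using ord_sym arc_fun by metis

lemma G_ultra:
  assumes "\<alpha> \<in> arcs" "\<beta> \<in> arcs" "\<gamma> \<in> arcs"
  shows "arc_dist \<alpha> \<gamma> \<le> max (arc_dist \<alpha> \<beta>) (arc_dist \<beta> \<gamma>)"
proof -
  define O1 where "O1 = puiseux_ord_fun (\<lambda>y. rep_rgerm \<alpha> y - rep_rgerm \<beta> y)"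
  define O2 where "O2 = puiseux_ord_fun (\<lambda>y. rep_rgerm \<beta> y - rep_rgerm \<gamma> y)"
  define O3 where "O3 = puiseux_ord_fun (\<lambda>y. rep_rgerm \<alpha> y - rep_rgerm \<gamma> y)"
  have m: "min O1 O2 \<le> O3" unfolding O1_def O2_def O3_def using ord_ultra arc_fun assms by blast
  have n: "O1 \<ge> 0" "O2 \<ge> 0" unfolding O1_def O2_def using ord_nonneg arc_diff arc_fun assms by blast+
  have "inverse O3 \<le> max (inverse O1) (inverse O2)"
  proof (cases "O1 \<le> O2")
    case True
    then have "inverse O3 \<le> inverse O1" using m n by (intro ereal_inverse_antimono) (auto simp: min_def)
    then show ?thesis by (rule max.coboundedI1)
  next
    case False
    then have "inverse O3 \<le> inverse O2" using m n by (intro ereal_inverse_antimono) (auto simp: min_def)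
    then show ?thesis by (rule max.coboundedI2)
  qed
  then show ?thesis unfolding dist_fun O1_def O2_def O3_def .
qed

lemma G_mono:
  assumes "\<alpha> \<in> arcs" "\<beta> \<in> arcs" "\<gamma> \<in> arcs" "germ_less \<alpha> \<beta>" "germ_less \<beta> \<gamma>"
  shows "arc_dist \<alpha> \<beta> \<le> arc_dist \<alpha> \<gamma>"
proof -
  have "arc_dist \<alpha> \<beta> = arc_dist \<beta> \<alpha>" "arc_dist \<alpha> \<gamma> = arc_dist \<gamma> \<alpha>" using G_sym assms by auto
  moreover have "puiseux_ord_fun (\<lambda>y. rep_rgerm \<gamma> y - rep_rgerm \<alpha> y)
      \<le> puiseux_ord_fun (\<lambda>y. rep_rgerm \<beta> y - rep_rgerm \<alpha> y)"
    using ord_mono[of "rep_rgerm \<alpha>" "rep_rgerm \<beta>" "rep_rgerm \<gamma>"] arc_fun assms less_fun by blast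
  moreover have "puiseux_ord_fun (\<lambda>y. rep_rgerm \<gamma> y - rep_rgerm \<alpha> y) \<ge> 0"
    using ord_nonneg arc_diff arc_fun assms by blast
  ultimately show ?thesis unfolding dist_fun by (metis ereal_inverse_antimono)
qed

lemma le_width: "x \<in> A \<Longrightarrow> y \<in> A \<Longrightarrow> arc_dist x y \<le> width A"
  unfolding width_def by (rule SUP_upper2[of "(x, y)"]) auto

theorem lemma5p6:
  assumes "zone A" and "zone B" and "zone C"
    and "adjacent A B" and "adjacent B C" and "lies_between A B C"
    and "closed_zone A" and "closed_zone C"
  shows "closed_zone (A \<union> B \<union> C)"
proof -
  let ?U = "A \<union> B \<union> C"
  let ?D = arc_dist
  obtain a1 a2 where a: "a1 \<in> A" "a2 \<in> A" "?D a1 a2 = width A" using assms(7) closed_zone_def by blast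
  obtain c1 c2 where c: "c1 \<in> C" "c2 \<in> C" "?D c1 c2 = width C" using assms(8) closed_zone_def by blast
  have ar: "?U \<subseteq> arcs" using assms(1-3) zone_def by auto
  define M where "M = max (?D a1 a2) (max (?D c1 c2) (?D a1 c1))"
  have bnd: "?D x a1 \<le> M" if x: "x \<in> ?U" for x
  proof -
    have xa: "x \<in> arcs" "a1 \<in> arcs" "c1 \<in> arcs" using x ar a c by auto
    consider "x \<in> A" | "x \<in> B" | "x \<in> C" using x by blast
    then show ?thesis
    proof cases
      case 1
      then have "?D x a1 \<le> width A" using a le_width by blast
      then show ?thesis using a unfolding M_def by (metis max.coboundedI1)
    next
      case 2
      have "germ_less a1 x" "germ_less x c1" using assms(6) 2 a c unfolding lies_between_def by auto
      then have "?D a1 x \<le> ?D a1 c1" using G_mono xa by blast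
      then show ?thesis using G_sym xa unfolding M_def by (metis max.coboundedI2)
    next
      case 3
      have "?D x a1 \<le> max (?D x c1) (?D c1 a1)" using G_ultra xa by blast
      moreover have "?D x c1 \<le> width C" using c 3 le_width by blast
      moreover have "?D c1 a1 = ?D a1 c1" using G_sym xa by blast
      ultimately show ?thesis using c unfolding M_def by (auto simp: max_def split: if_splits)
    qed
  qed
  have allb: "?D x y \<le> M" if "x \<in> ?U" "y \<in> ?U" for x y
  proof -
    have "?D x y \<le> max (?D x a1) (?D a1 y)" using G_ultra that ar a by blast
    moreover have "?D a1 y = ?D y a1" using G_sym that ar a by blast
    moreover have "?D x a1 \<le> M" "?D y a1 \<le> M" using bnd that by auto
    ultimately show ?thesis by (metis max.bounded_iff order.trans)
  qed
  have wle: "width ?U \<le> M" unfolding width_def using allb by (auto intro!: SUP_least)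
  have c1: "?D a1 a2 \<le> width ?U" "?D c1 c2 \<le> width ?U" "?D a1 c1 \<le> width ?U"
    using le_width[of a1 ?U a2] le_width[of c1 ?U c2] le_width[of a1 ?U c1] a(1,2) c(1,2) by auto
  have "M \<le> width ?U" using c1 unfolding M_def by auto
  then have eq: "width ?U = M" using wle by auto
  have "M = ?D a1 a2 \<or> M = ?D c1 c2 \<or> M = ?D a1 c1" unfolding M_def by (auto simp: max_def)
  then show ?thesis unfolding closed_zone_def eq using a c by blast
qed

end
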